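(* Let $r,s\in[0,1]$ with $s\neq 0$, and suppose $h:\Omega\to\Omega$ is a homeomorphism with $\mu_s=\mu_r\circ h^{-1}$. Fix $i\in\mathbb{N}$. Then the set of values \[\frac{\mu_r(C)}{\mu_r(h^{-1}(A_i))},\qquad C \text{ a clopen subset of } h^{-1}(A_i),\] is precisely the set of values $\frac{P(s)}{s}$ where $P$ ranges over partition polynomials dominated by the polynomial $X$; equivalently, it is precisely the set of values $P_1(s)$ where $P_1$ ranges over all partition polynomials. (Moreover, if $Q$ is a partition polynomial with $\mu_r(h^{-1}(A_i))=Q(r)$, the values $\mu_r(C)$ for clopen $C\subseteq h^{-1}(A_i)$ are values $R(r)$ with $R$ a partition polynomial dominated by $Q$.)
   Context: $\Omega=\{0,1\}^{\mathbb{N}}$ with the product topology. For $r\in[0,1]$, $\mu_r$ is the infinite product of the measure $\lambda_r$ on $\{0,1\}$ with $\lambda_r\{1\}=r$, $\lambda_r\{0\}=1-r$. For $i\in\mathbb{N}$, $A_i=\{x\in\Omega: x_i=1\}$. A polynomial with integer coefficients is a partition polynomial if it can be written as $\sum_{i=0}^n a_iX^i(1-X)^{n-i}$ for some $n\ge0$ and integers $0\le a_i\le\binom{n}{i}$. Given partition polynomials $P,Q$, $P$ dominates $Q$ if for some sufficiently large $n$ one can write $P(X)=\sum_{i=0}^n a_iX^i(1-X)^{n-i}$ and $Q(X)=\sum_{i=0}^n b_iX^i(1-X)^{n-i}$ with $0\le b_i\le a_i\le\binom{n}{i}$ for each $i\le n$. *)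

theory Defs
  imports "HOL-Probability.Probability" "HOL-Computational_Algebra.Polynomial"
begin

text \<open>Cantor space \<Omega> = {0,1}^\<nat> is modelled as the type nat \<Rightarrow> bool
  (True = 1), carrying the product topology of the discrete topology on bool
  (the library instance for function types).\<close>

type_synonym cantor = "nat \<Rightarrow> bool"

definition mu :: "real \<Rightarrow> cantor measure" where
  "mu r = PiM UNIV (\<lambda>_. measure_pmf (bernoulli_pmf r))"

definition cyl :: "nat \<Rightarrow> cantor set" where
  "cyl i = {x. x i}"

definition clopen_set :: "cantor set \<Rightarrow> bool" where
  "clopen_set C \<longleftrightarrow> open C \<and> closed C"

definition bpoly :: "nat \<Rightarrow> nat \<Rightarrow> int poly" where
  "bpoly n i = [:0, 1:] ^ i * [:1, -1:] ^ (n - i)"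

definition partition_poly :: "int poly \<Rightarrow> bool" where
  "partition_poly P \<longleftrightarrow> (\<exists>n a. (\<forall>i\<le>n. 0 \<le> a i \<and> a i \<le> int (n choose i))
       \<and> P = (\<Sum>i\<le>n. smult (a i) (bpoly n i)))"

definition dominates :: "int poly \<Rightarrow> int poly \<Rightarrow> bool" where
  "dominates P Q \<longleftrightarrow> (\<exists>n a b. (\<forall>i\<le>n. 0 \<le> b i \<and> b i \<le> a i \<and> a i \<le> int (n choose i))
       \<and> P = (\<Sum>i\<le>n. smult (a i) (bpoly n i))
       \<and> Q = (\<Sum>i\<le>n. smult (b i) (bpoly n i)))"

definition evalp :: "int poly \<Rightarrow> real \<Rightarrow> real" where
  "evalp P x = poly (map_poly real_of_int P) x"

end

theory Submission
  imports Defs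
begin


definition depJ :: "nat set \<Rightarrow> cantor set \<Rightarrow> bool" where
  "depJ K C \<longleftrightarrow> (\<forall>x y. (\<forall>j\<in>K. x j = y j) \<longrightarrow> (x \<in> C \<longleftrightarrow> y \<in> C))"

lemma open_bool: "open (S :: bool set)"
proof -
  have "{True} = {False<..}" "{False} = {..<True}" by auto
  then have o: "open {True}" "open {False}" by (metis open_greaterThan, metis open_lessThan)
  have "open {x}" for x :: bool by (cases x) (use o in simp_all)
  then have "open (\<Union>x\<in>S. {x})" by (intro open_UN) simp
  moreover have "(\<Union>x\<in>S. {x}) = S" by blast
  ultimately show ?thesis by simp
qed

lemma depJ_open:
  assumes "finite K" "depJ K C" shows "open C"
proof -
  have eq: "C = (\<Union>x\<in>C. {f. \<forall>j\<in>K. f (id j) \<in> {x j}})"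
  proof (intro equalityI subsetI)
    fix y assume "y \<in> C" then show "y \<in> (\<Union>x\<in>C. {f. \<forall>j\<in>K. f (id j) \<in> {x j}})" by (intro UN_I[of y]) auto
  next
    fix y assume "y \<in> (\<Union>x\<in>C. {f. \<forall>j\<in>K. f (id j) \<in> {x j}})"
    then obtain x where x: "x \<in> C" "\<forall>j\<in>K. y j = x j" by auto
    then show "y \<in> C" using assms(2) unfolding depJ_def by blast
  qed
  have op: "open {f. \<forall>j\<in>K. f (id j) \<in> {x j}}" for x :: cantor
    by (rule product_topology_basis') (use assms(1) open_bool in auto)
  have "open (\<Union>x\<in>C. {f. \<forall>j\<in>K. f (id j) \<in> {x j}})"
    by (intro open_UN ballI op)
  then show ?thesis using eq by simp
qed

lemma depJ_compl: "depJ K C \<Longrightarrow> depJ K (- C)"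
  unfolding depJ_def by blast

lemma depJ_clopen: "finite K \<Longrightarrow> depJ K C \<Longrightarrow> clopen_set C"
  unfolding clopen_set_def using depJ_open depJ_compl
  by (metis closed_def)

lemma depJ_mono: "depJ K C \<Longrightarrow> K \<subseteq> L \<Longrightarrow> depJ L C"
  unfolding depJ_def by blast

lemma open_local:
  assumes "open (C :: cantor set)" "x \<in> C"
  shows "\<exists>n. \<forall>y. (\<forall>j<n. y j = x j) \<longrightarrow> y \<in> C"
proof -
  from assms have "openin (product_topology (\<lambda>i. euclidean) UNIV) C" by (simp add: open_fun_def)
  then obtain U where U: "finite {i. U i \<noteq> (UNIV :: bool set)}" "x \<in> Pi\<^sub>E UNIV U" "Pi\<^sub>E UNIV U \<subseteq> C"
    using assms(2) unfolding openin_product_topology_alt by force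
  define n where "n = Suc (Max ({0} \<union> {i. U i \<noteq> UNIV}))"
  have "i < n" if "U i \<noteq> UNIV" for i
    using U(1) that unfolding n_def by (simp add: le_imp_less_Suc)
  have "y \<in> C" if "\<forall>j<n. y j = x j" for y
  proof -
    have "y \<in> Pi\<^sub>E UNIV U"
    proof -
      have "y i \<in> U i" for i
      proof (cases "U i = UNIV")
        case False
        then have "i < n" using \<open>\<And>i. U i \<noteq> UNIV \<Longrightarrow> i < n\<close> by blast
        then show ?thesis using that U(2) by (auto simp: PiE_def Pi_def)
      qed auto
      then show ?thesis by (auto simp: PiE_def)
    qed
    then show ?thesis using U(3) by blast
  qed
  then show ?thesis by blast
qed

lemma compact_cantor: "compact (UNIV :: cantor set)"
proof -
  have "compact_space (euclidean :: bool topology)"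
    by (simp add: compact_space_def compactin_euclidean_iff finite_imp_compact)
  then have "compact_space (product_topology (\<lambda>i::nat. euclidean :: bool topology) UNIV)"
    using compact_space_product_topology by blast
  then show ?thesis
    by (simp add: euclidean_product_topology compact_space_def compactin_euclidean_iff)
qed

lemma clopen_dep:
  assumes "clopen_set C" shows "\<exists>n. depJ {..<n} C"
proof -
  have "\<exists>n. (\<forall>y. (\<forall>j<n. y j = x j) \<longrightarrow> y \<in> C) \<or> (\<forall>y. (\<forall>j<n. y j = x j) \<longrightarrow> y \<in> - C)" for x
  proof (cases "x \<in> C")
    case True then show ?thesis using open_local[of C x] assms by (auto simp: clopen_set_def)
  next
    case False then show ?thesis using open_local[of "-C" x] assms by (auto simp: clopen_set_def open_Compl)
  qed
  then obtain N where N: "\<And>x. (\<forall>y. (\<forall>j<N x. y j = x j) \<longrightarrow> y \<in> C) \<or> (\<forall>y. (\<forall>j<N x. y j = x j) \<longrightarrow> y \<in> - C)"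
    by metis
  define Z where "Z x = {y. \<forall>j\<in>{..<N x}. y (id j) \<in> {x j}}" for x :: cantor
  have "open (Z x)" for x unfolding Z_def
    by (rule product_topology_basis') (use open_bool in auto)
  moreover have "UNIV \<subseteq> (\<Union>x\<in>UNIV. Z x)" unfolding Z_def by auto
  ultimately obtain X where X: "finite X" "UNIV \<subseteq> (\<Union>x\<in>X. Z x)"
    using compactE_image[OF compact_cantor, of UNIV Z] by metis
  define n where "n = Max ({0} \<union> N ` X)"
  have Nn: "x \<in> X \<Longrightarrow> N x \<le> n" for x unfolding n_def using X(1) by simp
  have "depJ {..<n} C"
    unfolding depJ_def
  proof (intro allI impI)
    fix x y :: cantor assume xy: "\<forall>j\<in>{..<n}. x j = y j"
    obtain z where z: "z \<in> X" "x \<in> Z z" using X(2) by blast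
    then have "\<forall>j<N z. x j = z j" "\<forall>j<N z. y j = z j"
      using Nn[OF z(1)] xy unfolding Z_def by auto
    then show "x \<in> C \<longleftrightarrow> y \<in> C" using N[of z] by blast
  qed
  then show ?thesis by blast
qed



lemma prob_mu: "prob_space (mu t)"
  unfolding mu_def by (rule prob_space_PiM) (simp add: prob_space_measure_pmf)

lemma space_mu: "space (mu t) = UNIV"
  unfolding mu_def by (simp add: space_PiM PiE_UNIV_domain)

definition cylF :: "nat set \<Rightarrow> nat set \<Rightarrow> cantor set" where
  "cylF J F = {x. {j\<in>J. x j} = F}"

lemma cylF_emb:
  assumes "F \<subseteq> J"
  shows "cylF J F = prod_emb UNIV (\<lambda>_. measure_pmf (bernoulli_pmf t)) J (\<Pi>\<^sub>E j\<in>J. {j \<in> F})"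
  using assms unfolding cylF_def prod_emb_def by (auto simp: space_PiM PiE_def Pi_def restrict_def extensional_def)

lemma cylF_sets:
  assumes "finite J" "F \<subseteq> J"
  shows "cylF J F \<in> sets (mu t)"
  unfolding cylF_emb[OF assms(2), of t] mu_def
  by (rule sets_PiM_I) (use assms in auto)

lemma cylF_measure:
  assumes "finite J" "F \<subseteq> J" "0 \<le> t" "t \<le> 1"
  shows "measure (mu t) (cylF J F) = t ^ card F * (1 - t) ^ (card J - card F)"
proof -
  have "emeasure (mu t) (cylF J F) = (\<Prod>j\<in>J. emeasure (measure_pmf (bernoulli_pmf t)) {j \<in> F})"
    unfolding cylF_emb[OF assms(2), of t] mu_def
    by (rule emeasure_PiM_emb) (use assms in \<open>auto simp: prob_space_measure_pmf\<close>)
  also have "\<dots> = (\<Prod>j\<in>J. ennreal (if j \<in> F then t else 1 - t))"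
    by (rule prod.cong) (use assms in \<open>auto simp: emeasure_pmf_single\<close>)
  also have "\<dots> = ennreal (\<Prod>j\<in>J. (if j \<in> F then t else 1 - t))"
    by (rule prod_ennreal) (use assms in auto)
  also have "(\<Prod>j\<in>J. (if j \<in> F then t else 1 - t)) = t ^ card F * (1 - t) ^ (card J - card F)"
  proof -
    have "(\<Prod>j\<in>J. (if j \<in> F then t else 1 - t)) = (\<Prod>j\<in>J - F. (if j \<in> F then t else 1 - t)) * (\<Prod>j\<in>F. (if j \<in> F then t else 1 - t))"
      by (rule prod.subset_diff[OF assms(2) assms(1)])
    also have "\<dots> = t ^ card F * (1 - t) ^ card (J - F)" by simp
    also have "card (J - F) = card J - card F"
      using assms(1,2) by (simp add: card_Diff_subset finite_subset)
    finally show ?thesis .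
  qed
  finally have "emeasure (mu t) (cylF J F) = ennreal (t ^ card F * (1 - t) ^ (card J - card F))" .
  then show ?thesis using assms by (simp add: measure_def)
qed

lemma setW_measure:
  assumes "finite J" "W \<subseteq> Pow J" "0 \<le> t" "t \<le> 1"
  shows "{x. {j\<in>J. x j} \<in> W} \<in> sets (mu t)"
    and "measure (mu t) {x. {j\<in>J. x j} \<in> W} = (\<Sum>F\<in>W. t ^ card F * (1 - t) ^ (card J - card F))"
proof -
  have fW: "finite W" using assms(1,2) by (meson finite_Pow_iff finite_subset)
  have eq: "{x. {j\<in>J. x j} \<in> W} = (\<Union>F\<in>W. cylF J F)" unfolding cylF_def by auto
  have s: "cylF J ` W \<subseteq> sets (mu t)" using cylF_sets assms by blast
  show "{x. {j\<in>J. x j} \<in> W} \<in> sets (mu t)"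
    unfolding eq using s fW by blast
  interpret prob_space "mu t" by (rule prob_mu)
  have "measure (mu t) (\<Union>F\<in>W. cylF J F) = (\<Sum>F\<in>W. measure (mu t) (cylF J F))"
    by (rule finite_measure_finite_Union) (use fW s in \<open>auto simp: disjoint_family_on_def cylF_def\<close>)
  also have "\<dots> = (\<Sum>F\<in>W. t ^ card F * (1 - t) ^ (card J - card F))"
    by (rule sum.cong) (use assms cylF_measure in auto)
  finally show "measure (mu t) {x. {j\<in>J. x j} \<in> W} = (\<Sum>F\<in>W. t ^ card F * (1 - t) ^ (card J - card F))"
    using eq by simp
qed

lemma depJ_setW:
  assumes "depJ J C"
  shows "C = {x. {j\<in>J. x j} \<in> {F. F \<subseteq> J \<and> (\<lambda>j. j \<in> F) \<in> C}}"
proof -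
  have "x \<in> C \<longleftrightarrow> (\<lambda>j. j \<in> {j\<in>J. x j}) \<in> C" for x
    using assms unfolding depJ_def by (metis (mono_tags, lifting) mem_Collect_eq)
  then show ?thesis by auto
qed

lemma depJ_sets:
  assumes "finite J" "depJ J C" "0 \<le> t" "t \<le> 1"
  shows "C \<in> sets (mu t)"
  using setW_measure(1)[OF assms(1) _ assms(3,4), of "{F. F \<subseteq> J \<and> (\<lambda>j. j \<in> F) \<in> C}"]
    depJ_setW[OF assms(2)] by auto



lemma map_poly_of_int_add: "map_poly real_of_int (p + q) = map_poly real_of_int p + map_poly real_of_int q"
  by (intro poly_eqI) (simp add: coeff_map_poly)

lemma evalp_add: "evalp (p + q) x = evalp p x + evalp q x"
  unfolding evalp_def by (simp add: map_poly_of_int_add)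

lemma evalp_smult: "evalp (smult a p) x = of_int a * evalp p x"
  unfolding evalp_def by (simp add: map_poly_smult)

lemma evalp_pCons: "evalp (pCons a p) x = of_int a + x * evalp p x"
  unfolding evalp_def by (simp add: map_poly_pCons)

lemma evalp_0[simp]: "evalp 0 x = 0" unfolding evalp_def by simp
lemma evalp_1[simp]: "evalp 1 x = 1" unfolding evalp_def by simp

lemma evalp_mult: "evalp (p * q) x = evalp p x * evalp q x"
proof (induction p)
  case 0 then show ?case by simp
next
  case (pCons a p)
  have "pCons a p * q = smult a q + pCons 0 (p * q)" by (simp add: mult_pCons_left)
  then show ?case using pCons by (simp add: evalp_add evalp_smult evalp_pCons algebra_simps)
qed

lemma evalp_power: "evalp (p ^ n) x = evalp p x ^ n"
  by (induction n) (simp_all add: evalp_mult)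

lemma evalp_sum: "evalp (\<Sum>i\<in>A. f i) x = (\<Sum>i\<in>A. evalp (f i) x)"
  by (induction A rule: infinite_finite_induct) (simp_all add: evalp_add)

lemma evalp_X: "evalp [:0, 1:] x = x" by (simp add: evalp_pCons)
lemma evalp_1mX: "evalp [:1, -1:] x = 1 - x" by (simp add: evalp_pCons)

lemma evalp_bpoly: "evalp (bpoly n k) x = x ^ k * (1 - x) ^ (n - k)"
  unfolding bpoly_def by (simp add: evalp_mult evalp_power evalp_X evalp_1mX)

lemma evalp_bsum: "evalp (\<Sum>k\<le>n. smult (a k) (bpoly n k)) x = (\<Sum>k\<le>n. of_int (a k) * x ^ k * (1 - x) ^ (n - k))"
  by (simp add: evalp_sum evalp_smult evalp_bpoly mult.assoc)

lemma bpoly_mult: "k \<le> n \<Longrightarrow> j \<le> m \<Longrightarrow> bpoly n k * bpoly m j = bpoly (n + m) (k + j)"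
proof -
  assume a: "k \<le> n" "j \<le> m"
  then have "n + m - (k + j) = (n - k) + (m - j)" by simp
  then show ?thesis unfolding bpoly_def by (simp add: power_add algebra_simps)
qed

lemma X_bpoly: "k \<le> m \<Longrightarrow> [:0, 1:] * bpoly m k = bpoly (Suc m) (Suc k)"
  unfolding bpoly_def by (simp add: Suc_diff_le algebra_simps)

lemma bpoly_0_0: "bpoly 0 0 = 1" unfolding bpoly_def by simp

lemma bpoly_at0: "poly (bpoly n k) 0 = (if k = 0 then 1 else 0)"
  unfolding bpoly_def by (simp add: poly_monom)

lemma bsum_one: "(\<Sum>k\<le>m. smult (int (m choose k)) (bpoly m k)) = 1"
proof -
  have "([:0, 1:] + [:1, -1:] :: int poly) ^ m = (\<Sum>k\<le>m. of_nat (m choose k) * [:0, 1:] ^ k * [:1, -1:] ^ (m - k))"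
    by (rule binomial_ring)
  moreover have "([:0, 1:] + [:1, -1:] :: int poly) = 1" by (simp add: one_pCons)
  moreover have "of_nat c * p = smult (int c) p" for c and p :: "int poly"
    by (simp add: of_nat_poly)
  ultimately have "(\<Sum>k\<le>m. smult (int (m choose k)) ([:0, 1:] ^ k * [:1, -1:] ^ (m - k))) = 1"
    by (metis (no_types, lifting) mult.assoc power_one sum.cong)
  then show ?thesis unfolding bpoly_def .
qed

lemma bsum_zero:
  "(\<Sum>k\<le>n. smult (c k) (bpoly n k)) = 0 \<Longrightarrow> k \<le> n \<Longrightarrow> c k = 0"
proof (induction n arbitrary: c k)
  case 0 then show ?case by (simp add: bpoly_0_0)
next
  case (Suc n)
  have split: "(\<Sum>k\<le>Suc n. smult (c k) (bpoly (Suc n) k)) =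
      smult (c 0) (bpoly (Suc n) 0) + [:0, 1:] * (\<Sum>k\<le>n. smult (c (Suc k)) (bpoly n k))"
  proof -
    have "(\<Sum>k\<le>Suc n. smult (c k) (bpoly (Suc n) k)) = smult (c 0) (bpoly (Suc n) 0) + (\<Sum>k\<le>n. smult (c (Suc k)) (bpoly (Suc n) (Suc k)))"
      by (rule sum.atMost_Suc_shift)
    also have "(\<Sum>k\<le>n. smult (c (Suc k)) (bpoly (Suc n) (Suc k))) = [:0, 1:] * (\<Sum>k\<le>n. smult (c (Suc k)) (bpoly n k))"
      unfolding sum_distrib_left by (rule sum.cong) (auto simp: X_bpoly[symmetric] mult_smult_right)
    finally show ?thesis .
  qed
  have "poly (\<Sum>k\<le>Suc n. smult (c k) (bpoly (Suc n) k)) 0 = c 0"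
    unfolding split by (simp add: bpoly_at0)
  then have c0: "c 0 = 0" using Suc.prems(1) by (metis poly_0)
  then have "[:0, 1:] * (\<Sum>k\<le>n. smult (c (Suc k)) (bpoly n k)) = 0"
    using Suc.prems(1) split by simp
  then have z: "(\<Sum>k\<le>n. smult (c (Suc k)) (bpoly n k)) = 0" by simp
  show ?case
  proof (cases k)
    case 0 then show ?thesis using c0 by simp
  next
    case (Suc k')
    then show ?thesis using Suc.IH[OF z, of k'] Suc.prems(2) by simp
  qed
qed

lemma bsum_unique:
  assumes "(\<Sum>k\<le>n. smult (c k) (bpoly n k)) = (\<Sum>k\<le>n. smult (d k) (bpoly n k))" "k \<le> n"
  shows "c k = d k"
proof -
  have "(\<Sum>k\<le>n. smult (c k - d k) (bpoly n k)) = 0"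
    using assms(1) by (simp add: smult_diff_left sum_subtractf)
  then show ?thesis using bsum_zero[OF _ assms(2)] by fastforce
qed



lemma group_sum:
  assumes "finite J" "card J = n" "W \<subseteq> Pow J"
  shows "(\<Sum>F\<in>W. t ^ card F * (1 - t) ^ (n - card F)) =
         evalp (\<Sum>k\<le>n. smult (int (card {F\<in>W. card F = k})) (bpoly n k)) t"
proof -
  have fW: "finite W" using assms by (meson finite_Pow_iff finite_subset)
  have "card ` W \<subseteq> {..n}" using assms by (auto intro: card_mono)
  then have "(\<Sum>F\<in>W. t ^ card F * (1 - t) ^ (n - card F)) =
      (\<Sum>k\<le>n. \<Sum>F\<in>{F\<in>W. card F = k}. t ^ card F * (1 - t) ^ (n - card F))"
    using sum.group[OF fW finite_atMost, where g=card and h="\<lambda>F. t ^ card F * (1 - t) ^ (n - card F)"] by simp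
  also have "\<dots> = (\<Sum>k\<le>n. real (card {F\<in>W. card F = k}) * t ^ k * (1 - t) ^ (n - k))"
    by (rule sum.cong) auto
  also have "\<dots> = evalp (\<Sum>k\<le>n. smult (int (card {F\<in>W. card F = k})) (bpoly n k)) t"
    by (simp add: evalp_bsum)
  finally show ?thesis .
qed

lemma group_card:
  assumes "finite J" "card J = n" "W \<subseteq> Pow J"
  shows "card {F\<in>W. card F = k} \<le> n choose k"
proof -
  have "{F\<in>W. card F = k} \<subseteq> {B. B \<subseteq> J \<and> card B = k}" using assms by auto
  then have "card {F\<in>W. card F = k} \<le> card {B. B \<subseteq> J \<and> card B = k}"
    by (rule card_mono[rotated]) (use assms in simp)
  then show ?thesis using n_subsets[OF assms(1)] assms(2) by simp
qed

lemma group_partition: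
  assumes "finite J" "card J = n" "W \<subseteq> Pow J"
  shows "partition_poly (\<Sum>k\<le>n. smult (int (card {F\<in>W. card F = k})) (bpoly n k))"
  unfolding partition_poly_def
  by (rule exI[of _ n], rule exI[of _ "\<lambda>k. int (card {F\<in>W. card F = k})"]) (use group_card[OF assms] in auto)

lemma depJ_setform: "depJ K {x. {j\<in>K. x j} \<in> W}"
  unfolding depJ_def
proof (intro allI impI)
  fix x y :: cantor assume "\<forall>j\<in>K. x j = y j"
  then have "{j\<in>K. x j} = {j\<in>K. y j}" by auto
  then show "x \<in> {x. {j\<in>K. x j} \<in> W} \<longleftrightarrow> y \<in> {x. {j\<in>K. x j} \<in> W}" by simp
qed

lemma clopen_partition:
  assumes "clopen_set C" "0 \<le> t" "t \<le> 1"
  shows "C \<in> sets (mu t)" "\<exists>P. partition_poly P \<and> measure (mu t) C = evalp P t"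
proof -
  obtain n where dep: "depJ {..<n} C" using clopen_dep[OF assms(1)] by blast
  define W where "W = {F. F \<subseteq> {..<n} \<and> (\<lambda>j. j \<in> F) \<in> C}"
  have C: "C = {x. {j\<in>{..<n}. x j} \<in> W}" using depJ_setW[OF dep] unfolding W_def .
  have W: "W \<subseteq> Pow {..<n}" unfolding W_def by auto
  show "C \<in> sets (mu t)" using setW_measure(1)[OF _ W assms(2,3)] C by simp
  have "measure (mu t) C = (\<Sum>F\<in>W. t ^ card F * (1 - t) ^ (n - card F))"
    using setW_measure(2)[OF _ W assms(2,3)] C by simp
  also have "\<dots> = evalp (\<Sum>k\<le>n. smult (int (card {F\<in>W. card F = k})) (bpoly n k)) t"
    by (rule group_sum) (use W in auto)
  finally show "\<exists>P. partition_poly P \<and> measure (mu t) C = evalp P t"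
    using group_partition[OF _ _ W] by auto
qed

lemma section_partition:
  assumes "clopen_set D" "D \<subseteq> cyl i" "0 \<le> t" "t \<le> 1"
  shows "\<exists>P. partition_poly P \<and> measure (mu t) D = t * evalp P t"
proof -
  obtain n0 where dep0: "depJ {..<n0} D" using clopen_dep[OF assms(1)] by blast
  define n where "n = max n0 (Suc i)"
  have dep: "depJ {..<n} D" using depJ_mono[OF dep0] unfolding n_def by auto
  have iJ: "i \<in> {..<n}" unfolding n_def by auto
  define W where "W = {F. F \<subseteq> {..<n} \<and> (\<lambda>j. j \<in> F) \<in> D}"
  have C: "D = {x. {j\<in>{..<n}. x j} \<in> W}" using depJ_setW[OF dep] unfolding W_def .
  have W: "W \<subseteq> Pow {..<n}" unfolding W_def by auto
  have iW: "F \<in> W \<Longrightarrow> i \<in> F" for F using assms(2) unfolding W_def cyl_def by auto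
  have fF: "F \<in> W \<Longrightarrow> finite F" for F using W finite_subset by auto
  define W' where "W' = (\<lambda>F. F - {i}) ` W"
  have W': "W' \<subseteq> Pow ({..<n} - {i})" unfolding W'_def using W by auto
  have inj: "inj_on (\<lambda>F. F - {i}) W"
    by (rule inj_onI) (metis iW insert_Diff)
  have cJ: "card ({..<n} - {i}) = n - 1" using iJ by simp
  have "measure (mu t) D = (\<Sum>F\<in>W. t ^ card F * (1 - t) ^ (n - card F))"
    using setW_measure(2)[OF _ W assms(3,4)] C by simp
  also have "\<dots> = (\<Sum>F\<in>W. t * (t ^ card (F - {i}) * (1 - t) ^ ((n - 1) - card (F - {i}))))"
  proof (rule sum.cong)
    fix F assume F: "F \<in> W"
    have c: "card (F - {i}) = card F - 1" using fF[OF F] iW[OF F] by simp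
    have c1: "card F \<ge> 1" using fF[OF F] iW[OF F] card_0_eq by fastforce
    have "card F \<le> n" using F W by (auto dest!: card_mono[rotated, of _ "{..<n}"])
    then have "(n - 1) - (card F - 1) = n - card F" using c1 by simp
    moreover have "t ^ card F = t * t ^ (card F - 1)" using c1
      by (metis Suc_diff_le diff_Suc_1 power_Suc)
    ultimately show "t ^ card F * (1 - t) ^ (n - card F) = t * (t ^ card (F - {i}) * (1 - t) ^ ((n - 1) - card (F - {i})))"
      using c by simp
  qed simp
  also have "\<dots> = t * (\<Sum>G\<in>W'. t ^ card G * (1 - t) ^ ((n - 1) - card G))"
    unfolding W'_def sum_distrib_left by (simp add: sum.reindex[OF inj])
  also have "(\<Sum>G\<in>W'. t ^ card G * (1 - t) ^ ((n - 1) - card G)) =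
      evalp (\<Sum>k\<le>n-1. smult (int (card {F\<in>W'. card F = k})) (bpoly (n-1) k)) t"
    by (rule group_sum[OF _ cJ W']) simp
  finally show ?thesis using group_partition[OF _ cJ W'] by auto
qed

lemma realize_W:
  assumes "\<forall>k\<le>n. 0 \<le> a k \<and> a k \<le> int (n choose k)" "finite J" "card J = n"
  shows "\<exists>W. W \<subseteq> Pow J \<and> (\<forall>t. (\<Sum>F\<in>W. t ^ card F * (1 - t) ^ (n - card F)) =
           evalp (\<Sum>k\<le>n. smult (a k) (bpoly n k)) t)"
proof -
  have "\<forall>k. \<exists>V. V \<subseteq> {B. B \<subseteq> J \<and> card B = k} \<and> (k \<le> n \<longrightarrow> card V = nat (a k))"
  proof
    fix k
    show "\<exists>V. V \<subseteq> {B. B \<subseteq> J \<and> card B = k} \<and> (k \<le> n \<longrightarrow> card V = nat (a k))"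
    proof (cases "k \<le> n")
      case True
      have "nat (a k) \<le> card {B. B \<subseteq> J \<and> card B = k}"
        using n_subsets[OF assms(2)] assms(1,3) True by fastforce
      then obtain V where "V \<subseteq> {B. B \<subseteq> J \<and> card B = k}" "card V = nat (a k)"
        by (meson obtain_subset_with_card_n)
      then show ?thesis by blast
    qed auto
  qed
  then obtain V where V: "\<And>k. V k \<subseteq> {B. B \<subseteq> J \<and> card B = k}" "\<And>k. k \<le> n \<Longrightarrow> card (V k) = nat (a k)"
    by metis
  define W where "W = (\<Union>k\<le>n. V k)"
  have W: "W \<subseteq> Pow J" unfolding W_def using V(1) by blast
  have Wk: "k \<le> n \<Longrightarrow> {F\<in>W. card F = k} = V k" for k
    unfolding W_def using V(1) by auto
  have "(\<Sum>F\<in>W. t ^ card F * (1 - t) ^ (n - card F)) = evalp (\<Sum>k\<le>n. smult (a k) (bpoly n k)) t" for t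
  proof -
    have "(\<Sum>F\<in>W. t ^ card F * (1 - t) ^ (n - card F)) =
         evalp (\<Sum>k\<le>n. smult (int (card {F\<in>W. card F = k})) (bpoly n k)) t"
      by (rule group_sum[OF assms(2,3) W])
    also have "(\<Sum>k\<le>n. smult (int (card {F\<in>W. card F = k})) (bpoly n k)) = (\<Sum>k\<le>n. smult (a k) (bpoly n k))"
      by (rule sum.cong) (use Wk V(2) assms(1) in auto)
    finally show ?thesis .
  qed
  then show ?thesis using W by blast
qed

lemma realize_clopen:
  assumes "partition_poly P" "0 \<le> t" "t \<le> 1"
  shows "\<exists>E. clopen_set E \<and> measure (mu t) E = evalp P t"
proof -
  obtain n a where na: "\<forall>k\<le>n. 0 \<le> a k \<and> a k \<le> int (n choose k)" "P = (\<Sum>k\<le>n. smult (a k) (bpoly n k))"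
    using assms(1) unfolding partition_poly_def by blast
  obtain W where W: "W \<subseteq> Pow {..<n}" "\<And>t. (\<Sum>F\<in>W. t ^ card F * (1 - t) ^ (n - card F)) = evalp P t"
    using realize_W[OF na(1), of "{..<n}"] na(2) by auto
  define E where "E = {x. {j\<in>{..<n}. x j} \<in> W}"
  have "depJ {..<n} E" unfolding E_def by (rule depJ_setform)
  then have "clopen_set E" using depJ_clopen by blast
  moreover have "measure (mu t) E = evalp P t"
    using setW_measure(2)[OF _ W(1) assms(2,3)] W(2) unfolding E_def by simp
  ultimately show ?thesis by blast
qed

lemma realize_section:
  assumes "partition_poly P" "0 \<le> t" "t \<le> 1"
  shows "\<exists>D. clopen_set D \<and> D \<subseteq> cyl i \<and> measure (mu t) D = t * evalp P t"
proof -
  obtain n a where na: "\<forall>k\<le>n. 0 \<le> a k \<and> a k \<le> int (n choose k)" "P = (\<Sum>k\<le>n. smult (a k) (bpoly n k))"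
    using assms(1) unfolding partition_poly_def by blast
  define J where "J = {Suc i..<Suc i + n}"
  have J: "finite J" "card J = n" "i \<notin> J" unfolding J_def by auto
  obtain W where W: "W \<subseteq> Pow J" "\<And>t. (\<Sum>F\<in>W. t ^ card F * (1 - t) ^ (n - card F)) = evalp P t"
    using realize_W[OF na(1) J(1,2)] na(2) by auto
  define K where "K = insert i J"
  define W2 where "W2 = insert i ` W"
  define D where "D = {x. {j\<in>K. x j} \<in> W2}"
  have W2: "W2 \<subseteq> Pow K" unfolding W2_def K_def using W(1) by auto
  have "depJ K D" unfolding D_def by (rule depJ_setform)
  then have "clopen_set D" using depJ_clopen J(1) unfolding K_def by blast
  moreover have "D \<subseteq> cyl i" unfolding D_def W2_def K_def cyl_def by auto
  moreover have "measure (mu t) D = t * evalp P t"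
  proof -
    have cK: "card K = Suc n" unfolding K_def using J by simp
    have inj: "inj_on (insert i) W"
      by (rule inj_onI) (metis J(3) PowD W(1) insert_ident subsetD)
    have fF: "F \<in> W \<Longrightarrow> finite F \<and> i \<notin> F" for F using W(1) J finite_subset by auto
    have "measure (mu t) D = (\<Sum>G\<in>W2. t ^ card G * (1 - t) ^ (card K - card G))"
      using setW_measure(2)[OF _ W2 assms(2,3)] J(1) unfolding D_def K_def by simp
    also have "\<dots> = (\<Sum>F\<in>W. t ^ card (insert i F) * (1 - t) ^ (Suc n - card (insert i F)))"
      unfolding W2_def cK by (simp add: sum.reindex[OF inj])
    also have "\<dots> = (\<Sum>F\<in>W. t * (t ^ card F * (1 - t) ^ (n - card F)))"
      by (rule sum.cong) (use fF in auto)
    also have "\<dots> = t * evalp P t" using W(2)[of t] by (simp only: sum_distrib_left[symmetric])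
    finally show ?thesis .
  qed
  ultimately show ?thesis by blast
qed



lemma Xmul: "[:0, 1:] * (\<Sum>j\<le>m. smult (v j) (bpoly m j)) =
   (\<Sum>k\<le>Suc m. smult (if k = 0 then 0 else v (k - 1)) (bpoly (Suc m) k))"
proof -
  have "(\<Sum>k\<le>Suc m. smult (if k = 0 then 0 else v (k - 1)) (bpoly (Suc m) k)) =
      smult (if (0::nat) = 0 then 0 else v (0 - 1)) (bpoly (Suc m) 0) +
      (\<Sum>k\<le>m. smult (if Suc k = 0 then 0 else v (Suc k - 1)) (bpoly (Suc m) (Suc k)))"
    by (rule sum.atMost_Suc_shift)
  also have "\<dots> = (\<Sum>k\<le>m. smult (v k) (bpoly (Suc m) (Suc k)))" by simp
  also have "\<dots> = (\<Sum>k\<le>m. smult (v k) ([:0, 1:] * bpoly m k))"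
    by (rule sum.cong[OF refl]) (subst X_bpoly, auto)
  also have "\<dots> = [:0, 1:] * (\<Sum>j\<le>m. smult (v j) (bpoly m j))"
    unfolding sum_distrib_left mult_smult_right by (rule refl)
  finally show ?thesis by simp
qed

definition conv :: "nat \<Rightarrow> nat \<Rightarrow> (nat \<Rightarrow> int) \<Rightarrow> (nat \<Rightarrow> int) \<Rightarrow> nat \<Rightarrow> int" where
  "conv n m u v l = (\<Sum>p\<in>{p\<in>{..n}\<times>{..m}. fst p + snd p = l}. u (fst p) * v (snd p))"

lemma bsum_mult:
  "(\<Sum>k\<le>n. smult (u k) (bpoly n k)) * (\<Sum>j\<le>m. smult (v j) (bpoly m j)) =
   (\<Sum>l\<le>n+m. smult (conv n m u v l) (bpoly (n+m) l))"
proof -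
  have "(\<Sum>k\<le>n. smult (u k) (bpoly n k)) * (\<Sum>j\<le>m. smult (v j) (bpoly m j)) =
      (\<Sum>k\<le>n. \<Sum>j\<le>m. smult (u k) (bpoly n k) * smult (v j) (bpoly m j))"
    by (rule sum_product)
  also have "\<dots> = (\<Sum>k\<le>n. \<Sum>j\<le>m. smult (u k * v j) (bpoly (n+m) (k+j)))"
    by (intro sum.cong refl) (simp add: bpoly_mult mult_smult_left mult_smult_right ac_simps)
  also have "\<dots> = (\<Sum>p\<in>{..n}\<times>{..m}. smult (u (fst p) * v (snd p)) (bpoly (n+m) (fst p + snd p)))"
    by (simp add: sum.cartesian_product case_prod_beta)
  also have "\<dots> = (\<Sum>l\<le>n+m. \<Sum>p\<in>{p\<in>{..n}\<times>{..m}. fst p + snd p = l}. smult (u (fst p) * v (snd p)) (bpoly (n+m) (fst p + snd p)))"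
    by (rule sum.group[symmetric]) auto
  also have "\<dots> = (\<Sum>l\<le>n+m. smult (conv n m u v l) (bpoly (n+m) l))"
    unfolding conv_def smult_sum by (intro sum.cong refl) auto
  finally show ?thesis .
qed

lemma conv_binom:
  assumes "l \<le> n + m"
  shows "conv n m (\<lambda>k. int (n choose k)) (\<lambda>j. int (m choose j)) l = int ((n + m) choose l)"
proof -
  have "(\<Sum>l\<le>n+m. smult (conv n m (\<lambda>k. int (n choose k)) (\<lambda>j. int (m choose j)) l) (bpoly (n+m) l)) =
        (\<Sum>l\<le>n+m. smult (int ((n + m) choose l)) (bpoly (n+m) l))"
    unfolding bsum_mult[symmetric] bsum_one by simp
  then show ?thesis by (rule bsum_unique[OF _ assms])
qed

lemma conv_mono:
  assumes "\<forall>k\<le>n. 0 \<le> u k \<and> u k \<le> u' k" "\<forall>j\<le>m. 0 \<le> v j \<and> v j \<le> v' j"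
  shows "0 \<le> conv n m u v l" "conv n m u v l \<le> conv n m u' v' l"
proof -
  show "0 \<le> conv n m u v l" unfolding conv_def
    by (rule sum_nonneg) (use assms in auto)
  show "conv n m u v l \<le> conv n m u' v' l" unfolding conv_def
    by (rule sum_mono) (use assms in \<open>auto intro!: mult_mono\<close>)
qed

lemma dominates_partition: "dominates Q R \<Longrightarrow> partition_poly R"
proof -
  assume "dominates Q R"
  then obtain n a b where "\<forall>i\<le>n. 0 \<le> b i \<and> b i \<le> a i \<and> a i \<le> int (n choose i)"
    "R = (\<Sum>i\<le>n. smult (b i) (bpoly n i))" unfolding dominates_def by blast
  then show ?thesis unfolding partition_poly_def
    by (intro exI[of _ n] exI[of _ b]) (auto intro: order.trans)
qed

lemma dominates_mult:
  assumes "partition_poly Q" "partition_poly P"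
  shows "dominates Q (Q * P)"
proof -
  obtain n a where a: "\<forall>k\<le>n. 0 \<le> a k \<and> a k \<le> int (n choose k)" "Q = (\<Sum>k\<le>n. smult (a k) (bpoly n k))"
    using assms(1) unfolding partition_poly_def by blast
  obtain m c where c: "\<forall>k\<le>m. 0 \<le> c k \<and> c k \<le> int (m choose k)" "P = (\<Sum>k\<le>m. smult (c k) (bpoly m k))"
    using assms(2) unfolding partition_poly_def by blast
  define A where "A = conv n m a (\<lambda>j. int (m choose j))"
  define B where "B = conv n m a c"
  have "Q = Q * 1" by simp
  also have "\<dots> = (\<Sum>l\<le>n+m. smult (A l) (bpoly (n+m) l))"
    unfolding A_def a(2) bsum_mult[symmetric] bsum_one[of m] ..
  finally have QA: "Q = (\<Sum>l\<le>n+m. smult (A l) (bpoly (n+m) l))" .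
  have QB: "Q * P = (\<Sum>l\<le>n+m. smult (B l) (bpoly (n+m) l))"
    unfolding B_def a(2) c(2) bsum_mult ..
  have "\<forall>l\<le>n+m. 0 \<le> B l \<and> B l \<le> A l \<and> A l \<le> int ((n + m) choose l)"
  proof (intro allI impI conjI)
    fix l assume l: "l \<le> n + m"
    show "0 \<le> B l" unfolding B_def by (rule conv_mono(1)) (use a c in auto)
    show "B l \<le> A l" unfolding A_def B_def by (rule conv_mono(2)) (use a c in auto)
    have "A l \<le> conv n m (\<lambda>k. int (n choose k)) (\<lambda>j. int (m choose j)) l"
      unfolding A_def by (rule conv_mono(2)) (use a c in auto)
    then show "A l \<le> int ((n + m) choose l)" using conv_binom[OF l] by simp
  qed
  then show ?thesis unfolding dominates_def using QA QB by blast
qed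

lemma X_partition:
  assumes "partition_poly P1"
  shows "partition_poly ([:0, 1:] * P1) \<and> dominates [:0, 1:] ([:0, 1:] * P1)"
proof -
  obtain m c where c: "\<forall>k\<le>m. 0 \<le> c k \<and> c k \<le> int (m choose k)" "P1 = (\<Sum>k\<le>m. smult (c k) (bpoly m k))"
    using assms unfolding partition_poly_def by blast
  define A where "A = (\<lambda>k. if k = 0 then 0 else int (m choose (k - 1)))"
  define B where "B = (\<lambda>k. if k = 0 then 0 else c (k - 1))"
  have XA: "[:0, 1:] = (\<Sum>k\<le>Suc m. smult (A k) (bpoly (Suc m) k))"
    using Xmul[of "\<lambda>j. int (m choose j)" m] unfolding bsum_one A_def by simp
  have XB: "[:0, 1:] * P1 = (\<Sum>k\<le>Suc m. smult (B k) (bpoly (Suc m) k))"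
    unfolding c(2) B_def by (rule Xmul)
  have "\<forall>k\<le>Suc m. 0 \<le> B k \<and> B k \<le> A k \<and> A k \<le> int (Suc m choose k)"
  proof (intro allI impI)
    fix k assume k: "k \<le> Suc m"
    show "0 \<le> B k \<and> B k \<le> A k \<and> A k \<le> int (Suc m choose k)"
    proof (cases k)
      case (Suc k')
      then show ?thesis using c(1) k unfolding A_def B_def by auto
    qed (simp add: A_def B_def)
  qed
  then have d: "dominates [:0, 1:] ([:0, 1:] * P1)"
    unfolding dominates_def using XA XB by blast
  then show ?thesis using dominates_partition by blast
qed

lemma dominates_X:
  assumes "dominates [:0, 1:] P"
  shows "\<exists>P1. partition_poly P1 \<and> P = [:0, 1:] * P1"
proof -
  obtain n a b where nab: "\<forall>k\<le>n. 0 \<le> b k \<and> b k \<le> a k \<and> a k \<le> int (n choose k)"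
    "[:0, 1:] = (\<Sum>k\<le>n. smult (a k) (bpoly n k))" "P = (\<Sum>k\<le>n. smult (b k) (bpoly n k))"
    using assms unfolding dominates_def by blast
  show ?thesis
  proof (cases n)
    case 0
    then have "[:0, 1:] = smult (a 0) (1 :: int poly)" using nab(2) by (simp add: bpoly_0_0)
    then have "poly [:0, 1:] (0::int) = poly [:0, 1:] 1" by simp
    then show ?thesis by simp
  next
    case (Suc m)
    have "[:0, 1:] = (\<Sum>k\<le>Suc m. smult (if k = 0 then 0 else int (m choose (k - 1))) (bpoly (Suc m) k))"
      using Xmul[of "\<lambda>j. int (m choose j)" m] unfolding bsum_one by simp
    note Xif = this
    have eqs: "(\<Sum>k\<le>Suc m. smult (a k) (bpoly (Suc m) k)) = (\<Sum>k\<le>Suc m. smult (if k = 0 then 0 else int (m choose (k - 1))) (bpoly (Suc m) k))"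
      by (rule HOL.trans[OF HOL.sym[OF nab(2)[unfolded Suc]] Xif])
    have aeq: "k \<le> Suc m \<Longrightarrow> a k = (if k = 0 then 0 else int (m choose (k - 1)))" for k
      by (rule bsum_unique[OF eqs])
    have b0: "b 0 = 0" using aeq[of 0] nab(1) by force
    have bb: "k \<le> m \<Longrightarrow> 0 \<le> b (Suc k) \<and> b (Suc k) \<le> int (m choose k)" for k
      using aeq[of "Suc k"] nab(1) Suc by force
    define P1 where "P1 = (\<Sum>k\<le>m. smult (b (Suc k)) (bpoly m k))"
    have "partition_poly P1" unfolding partition_poly_def P1_def
      by (intro exI[of _ m] exI[of _ "\<lambda>k. b (Suc k)"]) (use bb in auto)
    moreover have "P = [:0, 1:] * P1"
    proof -
      have "[:0, 1:] * P1 = (\<Sum>k\<le>Suc m. smult (if k = 0 then 0 else b (Suc (k - 1))) (bpoly (Suc m) k))"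
        unfolding P1_def by (rule Xmul)
      also have "\<dots> = (\<Sum>k\<le>Suc m. smult (b k) (bpoly (Suc m) k))"
        by (rule sum.cong) (use b0 in auto)
      finally show ?thesis using nab(3) Suc by simp
    qed
    ultimately show ?thesis by blast
  qed
qed



lemma clopen_vimage:
  assumes "continuous_on UNIV f" "clopen_set (C :: cantor set)"
  shows "clopen_set (f -` C :: cantor set)"
proof -
  have "open (f -` C)" using assms continuous_on_open_vimage[of UNIV f] unfolding clopen_set_def by auto
  moreover have "closed (f -` C)" using assms continuous_on_closed_vimage[of UNIV f] unfolding clopen_set_def by auto
  ultimately show ?thesis unfolding clopen_set_def by simp
qed

lemma cyl_clopen: "clopen_set (cyl i)"
proof -
  have "cyl i = {x. {j\<in>{i}. x j} \<in> {{i}}}" unfolding cyl_def by auto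
  then show ?thesis using depJ_clopen[of "{i}"] depJ_setform by (metis finite.emptyI finite.insertI)
qed

lemma cyl_measure: "0 \<le> t \<Longrightarrow> t \<le> 1 \<Longrightarrow> measure (mu t) (cyl i) = t"
proof -
  assume t: "0 \<le> t" "t \<le> 1"
  have "cyl i = {x. {j\<in>{i}. x j} \<in> {{i}}}" unfolding cyl_def by auto
  then show ?thesis using setW_measure(2)[of "{i}" "{{i}}" t] t by simp
qed

lemma h_measurable:
  assumes "continuous_on UNIV h" "0 \<le> r" "r \<le> 1"
  shows "h \<in> measurable (mu r) (mu r)"
  unfolding mu_def
proof (rule measurable_PiM_single)
  show "h \<in> space (Pi\<^sub>M UNIV (\<lambda>_. measure_pmf (bernoulli_pmf r))) \<rightarrow> (\<Pi>\<^sub>E i\<in>UNIV. space (measure_pmf (bernoulli_pmf r)))"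
    by (simp add: space_PiM)
  fix A i
  have "depJ {i} {x :: cantor. x i \<in> A}" unfolding depJ_def by auto
  then have "clopen_set {x :: cantor. x i \<in> A}" using depJ_clopen by blast
  then have "clopen_set (h -` {x. x i \<in> A})" using clopen_vimage assms(1) by blast
  then have "h -` {x. x i \<in> A} \<in> sets (mu r)" using clopen_partition(1) assms(2,3) by blast
  then show "{\<omega> \<in> space (Pi\<^sub>M UNIV (\<lambda>_. measure_pmf (bernoulli_pmf r))). h \<omega> i \<in> A} \<in> sets (Pi\<^sub>M UNIV (\<lambda>_. measure_pmf (bernoulli_pmf r)))"
    unfolding mu_def by (simp add: space_PiM vimage_def)
qed

theorem mainTheorem4:
  fixes r s :: real and h :: "cantor \<Rightarrow> cantor" and i :: nat
  assumes "0 \<le> r" "r \<le> 1" "0 \<le> s" "s \<le> 1" "s \<noteq> 0"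
    and "\<exists>g. homeomorphism UNIV UNIV h g"
    and "distr (mu r) (mu r) h = mu s"
  shows "{measure (mu r) C / measure (mu r) (h -` cyl i) | C. clopen_set C \<and> C \<subseteq> h -` cyl i}
           = {evalp P s / s | P. partition_poly P \<and> dominates [:0, 1:] P}
         \<and> {measure (mu r) C / measure (mu r) (h -` cyl i) | C. clopen_set C \<and> C \<subseteq> h -` cyl i}
           = {evalp P s | P. partition_poly P}
         \<and> (\<forall>Q C. partition_poly Q \<longrightarrow> measure (mu r) (h -` cyl i) = evalp Q r \<longrightarrow>
           clopen_set C \<longrightarrow> C \<subseteq> h -` cyl i \<longrightarrow>
           (\<exists>R. partition_poly R \<and> dominates Q R \<and> measure (mu r) C = evalp R r))"
proof -
  obtain g where hg: "homeomorphism UNIV UNIV h g" using assms(6) by blast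
  have hc: "continuous_on UNIV h" and gc: "continuous_on UNIV g"
    and gh: "\<And>x. g (h x) = x" and hg': "\<And>y. h (g y) = y"
    using hg unfolding homeomorphism_def by auto
  have hm: "h \<in> measurable (mu r) (mu r)" by (rule h_measurable[OF hc assms(1,2)])
  have transfer: "measure (mu r) (h -` D) = measure (mu s) D" if "clopen_set D" for D
  proof -
    have "D \<in> sets (mu r)" using clopen_partition(1)[OF that assms(1,2)] .
    then have "measure (distr (mu r) (mu r) h) D = measure (mu r) (h -` D \<inter> space (mu r))"
      using measure_distr[OF hm] by blast
    then show ?thesis using assms(7) by (simp add: space_mu)
  qed
  have mU: "measure (mu r) (h -` cyl i) = s"
    using transfer[OF cyl_clopen] cyl_measure assms(3,4) by simp
  have pull: "clopen_set (g -` C) \<and> g -` C \<subseteq> cyl i \<and> h -` (g -` C) = C"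
    if "clopen_set C" "C \<subseteq> h -` cyl i" for C
  proof (intro conjI)
    show "clopen_set (g -` C)" using clopen_vimage[OF gc that(1)] .
    show "g -` C \<subseteq> cyl i"
    proof
      fix y assume "y \<in> g -` C"
      then have "h (g y) \<in> cyl i" using that(2) by auto
      then show "y \<in> cyl i" using hg' by simp
    qed
    show "h -` (g -` C) = C" using gh by auto
  qed
  define S0 where "S0 = {measure (mu r) C / measure (mu r) (h -` cyl i) | C. clopen_set C \<and> C \<subseteq> h -` cyl i}"
  have S02: "S0 = {evalp P s | P. partition_poly P}"
  proof (intro set_eqI iffI)
    fix v assume "v \<in> S0"
    then obtain C where C: "clopen_set C" "C \<subseteq> h -` cyl i" "v = measure (mu r) C / measure (mu r) (h -` cyl i)"
      unfolding S0_def by blast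
    have D: "clopen_set (g -` C)" "g -` C \<subseteq> cyl i" "h -` (g -` C) = C" using pull[OF C(1,2)] by auto
    obtain P where P: "partition_poly P" "measure (mu s) (g -` C) = s * evalp P s"
      using section_partition[OF D(1,2) assms(3,4)] by blast
    have "v = evalp P s" using C(3) mU transfer[OF D(1)] D(3) P(2) assms(5) by simp
    then show "v \<in> {evalp P s | P. partition_poly P}" using P(1) by blast
  next
    fix v assume "v \<in> {evalp P s | P. partition_poly P}"
    then obtain P where P: "partition_poly P" "v = evalp P s" by blast
    obtain D where D: "clopen_set D" "D \<subseteq> cyl i" "measure (mu s) D = s * evalp P s"
      using realize_section[OF P(1) assms(3,4)] by blast
    have "clopen_set (h -` D)" using clopen_vimage[OF hc D(1)] .
    moreover have "h -` D \<subseteq> h -` cyl i" using D(2) by auto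
    moreover have "v = measure (mu r) (h -` D) / measure (mu r) (h -` cyl i)"
      using transfer[OF D(1)] D(3) mU P(2) assms(5) by simp
    ultimately show "v \<in> S0" unfolding S0_def by blast
  qed
  have S12: "{evalp P s / s | P. partition_poly P \<and> dominates [:0, 1:] P} = {evalp P s | P. partition_poly P}"
  proof (intro set_eqI iffI)
    fix v assume "v \<in> {evalp P s / s | P. partition_poly P \<and> dominates [:0, 1:] P}"
    then obtain P where P: "dominates [:0, 1:] P" "v = evalp P s / s" by blast
    obtain P1 where P1: "partition_poly P1" "P = [:0, 1:] * P1" using dominates_X[OF P(1)] by blast
    have "v = evalp P1 s" using P(2) P1(2) assms(5) by (simp add: evalp_mult evalp_X evalp_pCons)
    then show "v \<in> {evalp P s | P. partition_poly P}" using P1(1) by blast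
  next
    fix v assume "v \<in> {evalp P s | P. partition_poly P}"
    then obtain P1 where P1: "partition_poly P1" "v = evalp P1 s" by blast
    have "v = evalp ([:0, 1:] * P1) s / s" using P1(2) assms(5) by (simp add: evalp_mult evalp_X evalp_pCons)
    then show "v \<in> {evalp P s / s | P. partition_poly P \<and> dominates [:0, 1:] P}"
      using X_partition[OF P1(1)] by blast
  qed
  have part3: "\<forall>Q C. partition_poly Q \<longrightarrow> measure (mu r) (h -` cyl i) = evalp Q r \<longrightarrow>
           clopen_set C \<longrightarrow> C \<subseteq> h -` cyl i \<longrightarrow>
           (\<exists>R. partition_poly R \<and> dominates Q R \<and> measure (mu r) C = evalp R r)"
  proof (intro allI impI)
    fix Q C assume Q: "partition_poly Q" "measure (mu r) (h -` cyl i) = evalp Q r"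
      and C: "clopen_set C" "C \<subseteq> h -` cyl i"
    have D: "clopen_set (g -` C)" "g -` C \<subseteq> cyl i" "h -` (g -` C) = C" using pull[OF C] by auto
    obtain P1 where P1: "partition_poly P1" "measure (mu s) (g -` C) = s * evalp P1 s"
      using section_partition[OF D(1,2) assms(3,4)] by blast
    obtain E where E: "clopen_set E" "measure (mu s) E = evalp P1 s"
      using realize_clopen[OF P1(1) assms(3,4)] by blast
    have hE: "clopen_set (h -` E)" using clopen_vimage[OF hc E(1)] .
    obtain P2 where P2: "partition_poly P2" "measure (mu r) (h -` E) = evalp P2 r"
      using clopen_partition(2)[OF hE assms(1,2)] by blast
    have dom: "dominates Q (Q * P2)" by (rule dominates_mult[OF Q(1) P2(1)])
    have "measure (mu r) C = s * evalp P1 s" using transfer[OF D(1)] D(3) P1(2) by simp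
    also have "\<dots> = evalp Q r * evalp P2 r" using Q(2) mU P2(2) transfer[OF E(1)] E(2) by simp
    also have "\<dots> = evalp (Q * P2) r" by (simp add: evalp_mult)
    finally show "\<exists>R. partition_poly R \<and> dominates Q R \<and> measure (mu r) C = evalp R r"
      using dom dominates_partition by blast
  qed
  show ?thesis using S02 S12 part3 unfolding S0_def by simp
qed

end
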